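(* Let $R\in\mathfrak{U}$ and $\mathfrak{U}'\subseteq\mathfrak{U}$, and suppose that either $\mathfrak{U}'=\mathfrak{U}$, or $R\in\mathfrak{C}_o$ and $\mathfrak{C}_o\subseteq\mathfrak{U}'\subseteq\mathfrak{U}$. Then for every $S\in\mathfrak{U}$, the following are equivalent: - $R\sqsubseteq_\Gamma S$ with respect to $\mathfrak{U}'$; - $\#\mathcal{S}_u(G,R)\le\#\mathcal{S}_u(G,S)$ for all $G\in\mathfrak{U}'$. Moreover, the latter condition implies $\#\mathcal{H}_u(G,R)\le\#\mathcal{H}_u(G,S)$ for all $G\in\mathfrak{U}'$.
   Context: **Undirected graphs.** - An undirected graph $G$ consists of a finite non-empty vertex set $V(G)$ and an edge set $E(G)$ of subsets of $V(G)$ of size 1 or 2. One-element edges are loops. - $G^*$ is $G$ with all loops removed. - $\mathfrak{U}$ is the class of undirected graphs. - A homomorphism $\zeta:G\to H$ is a map $V(G)\to V(H)$ with $\{\zeta(v),\zeta(w)\}\in E(H)$ for every $\{v,w\}\in E(G)$. $\mathcal{H}_u(G,H)$ is the set of homomorphisms. - $\mathcal{S}_u(G,H)=\mathcal{H}_u(G,H)\cap\mathcal{H}_u(G^*,H^* )$ is the set of strict homomorphisms, i.e. those mapping every two-element edge to a two-element edge. - $\mathfrak{C}_o=\{G\in\mathfrak{U}:G^*\text{ contains no cycle of odd length}\}$. **Connectivity.** - $v,w$ are adjacent if $v\neq w$ and $\{v,w\}\in E(G)$. - For $X\subseteq V(G)$ and $v,w\in X$, the vertices $v$ and $w$ are connected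 in $X$ if $v=w$, or if there are $z_0=v,\dots,z_I=w$ in $X$ with consecutive terms adjacent. - $\gamma_X(v)$ is the set of such $w$. - $\Gamma_\zeta(v)=\gamma_{\zeta^{-1}(\zeta(v))}(v)$. **Schemes.** - $\mathfrak{U}'_r$ is a fixed system of representatives of $\mathfrak{U}'$ up to isomorphism. - $R\sqsubseteq_\Gamma S$ with respect to $\mathfrak{U}'$ means there exist injective maps $\rho_G:\mathcal{H}_u(G,R)\to\mathcal{H}_u(G,S)$, $G\in\mathfrak{U}'_r$, with $\Gamma_{\rho_G(\zeta)}(v)=\Gamma_\zeta(v)$ for all $G$, $\zeta$ and $v$. *)

theory Defs
  imports "HOL-Library.FuncSet"
begin

record 'a ugraph =
  verts :: "'a set"
  edges :: "'a set set"

definition ugraph :: "('a, 'b) ugraph_scheme \<Rightarrow> bool" where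
  "ugraph G \<longleftrightarrow> finite (verts G) \<and> verts G \<noteq> {} \<and>
     (\<forall>e\<in>edges G. e \<subseteq> verts G \<and> (card e = 1 \<or> card e = 2))"

definition loopfree :: "'a ugraph \<Rightarrow> 'a ugraph" where
  "loopfree G = \<lparr>verts = verts G, edges = {e\<in>edges G. card e = 2}\<rparr>"

definition hom :: "'c ugraph \<Rightarrow> 'a ugraph \<Rightarrow> ('c \<Rightarrow> 'a) set" where
  "hom G H = {\<zeta> \<in> verts G \<rightarrow>\<^sub>E verts H. \<forall>e\<in>edges G. \<zeta> ` e \<in> edges H}"

definition strict_hom :: "'c ugraph \<Rightarrow> 'a ugraph \<Rightarrow> ('c \<Rightarrow> 'a) set" where
  "strict_hom G H = hom G H \<inter> hom (loopfree G) (loopfree H)"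

definition has_odd_cycle :: "'a ugraph \<Rightarrow> bool" where
  "has_odd_cycle G \<longleftrightarrow> (\<exists>k vs. odd k \<and> 3 \<le> k \<and> inj_on vs {..<k} \<and>
      (\<forall>i<k. vs i \<in> verts G \<and> {vs i, vs (Suc i mod k)} \<in> edges G))"

definition in_Co :: "'a ugraph \<Rightarrow> bool" where
  "in_Co G \<longleftrightarrow> ugraph G \<and> \<not> has_odd_cycle (loopfree G)"

definition adjacent :: "'a ugraph \<Rightarrow> 'a \<Rightarrow> 'a \<Rightarrow> bool" where
  "adjacent G v w \<longleftrightarrow> v \<noteq> w \<and> {v, w} \<in> edges G"

definition connected_in :: "'a ugraph \<Rightarrow> 'a set \<Rightarrow> 'a \<Rightarrow> 'a \<Rightarrow> bool" where
  "connected_in G X v w \<longleftrightarrow> v = w \<or>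
     (\<exists>zs. zs \<noteq> [] \<and> hd zs = v \<and> last zs = w \<and> set zs \<subseteq> X \<and>
        (\<forall>i. Suc i < length zs \<longrightarrow> adjacent G (zs ! i) (zs ! Suc i)))"

definition gamma :: "'a ugraph \<Rightarrow> 'a set \<Rightarrow> 'a \<Rightarrow> 'a set" where
  "gamma G X v = {w \<in> X. connected_in G X v w}"

definition Gamma :: "'c ugraph \<Rightarrow> ('c \<Rightarrow> 'a) \<Rightarrow> 'c \<Rightarrow> 'c set" where
  "Gamma G \<zeta> v = gamma G {u \<in> verts G. \<zeta> u = \<zeta> v} v"

definition iso :: "'c ugraph \<Rightarrow> 'd ugraph \<Rightarrow> bool" where
  "iso G H \<longleftrightarrow> (\<exists>f. bij_betw f (verts G) (verts H) \<and> (\<lambda>e. f ` e) ` edges G = edges H)"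

definition rep_system :: "'c ugraph set \<Rightarrow> 'c ugraph set \<Rightarrow> bool" where
  "rep_system U' Ur \<longleftrightarrow> Ur \<subseteq> U' \<and> (\<forall>G\<in>U'. \<exists>!H. H \<in> Ur \<and> iso G H)"

text \<open>R \<sqsubseteq>_Gamma S with respect to U' (with representative system Ur).\<close>
definition sqsub_Gamma ::
  "'c ugraph set \<Rightarrow> 'a ugraph \<Rightarrow> 'b ugraph \<Rightarrow> bool" where
  "sqsub_Gamma Ur R S \<longleftrightarrow>
     (\<exists>\<rho> :: 'c ugraph \<Rightarrow> ('c \<Rightarrow> 'a) \<Rightarrow> ('c \<Rightarrow> 'b).
        \<forall>G\<in>Ur. inj_on (\<rho> G) (hom G R) \<and> \<rho> G ` hom G R \<subseteq> hom G S \<and>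
          (\<forall>\<zeta>\<in>hom G R. \<forall>v\<in>verts G. Gamma G (\<rho> G \<zeta>) v = Gamma G \<zeta> v))"

end

theory Submission
  imports Defs
begin


definition adjX :: "'a ugraph \<Rightarrow> 'a set \<Rightarrow> 'a \<Rightarrow> 'a \<Rightarrow> bool" where
  "adjX G X a b \<longleftrightarrow> a \<in> X \<and> b \<in> X \<and> adjacent G a b"

lemma path_rtrancl:
  "zs \<noteq> [] \<Longrightarrow> set zs \<subseteq> X \<Longrightarrow> (\<forall>i. Suc i < length zs \<longrightarrow> adjacent G (zs!i) (zs!Suc i))
   \<Longrightarrow> (adjX G X)\<^sup>*\<^sup>* (hd zs) (last zs)"
proof (induction zs)
  case Nil thus ?case by simp
next
  case (Cons a zs)
  show ?case
  proof (cases "zs = []")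
    case True thus ?thesis by simp
  next
    case False
    have ch: "\<forall>i. Suc i < length zs \<longrightarrow> adjacent G (zs!i) (zs!Suc i)"
    proof (intro allI impI)
      fix i assume "Suc i < length zs"
      then have "Suc (Suc i) < length (a#zs)" by simp
      then have "adjacent G ((a#zs)!Suc i) ((a#zs)!Suc (Suc i))" using Cons.prems(3) by blast
      then show "adjacent G (zs!i) (zs!Suc i)" by simp
    qed
    have "(adjX G X)\<^sup>*\<^sup>* (hd zs) (last zs)" using Cons.IH False Cons.prems(2) ch by auto
    moreover have "adjX G X a (hd zs)"
    proof -
      have "Suc 0 < length (a#zs)" using False by simp
      then have "adjacent G ((a#zs)!0) ((a#zs)!Suc 0)" using Cons.prems(3) by blast
      then show ?thesis using Cons.prems(2) False unfolding adjX_def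
        by (simp add: hd_conv_nth) (metis hd_in_set hd_conv_nth subsetD)
    qed
    ultimately show ?thesis using False by (simp add: converse_rtranclp_into_rtranclp)
  qed
qed

lemma rtrancl_path:
  "(adjX G X)\<^sup>*\<^sup>* v w \<Longrightarrow> v = w \<or> (\<exists>zs. zs \<noteq> [] \<and> hd zs = v \<and> last zs = w \<and> set zs \<subseteq> X \<and>
      (\<forall>i. Suc i < length zs \<longrightarrow> adjacent G (zs!i) (zs!Suc i)))"
proof (induction rule: converse_rtranclp_induct)
  case base thus ?case by simp
next
  case (step a b)
  from step.hyps(1) have a: "a \<in> X" "b \<in> X" "adjacent G a b" by (auto simp: adjX_def)
  from step.IH show ?case
  proof
    assume "b = w"
    have "\<forall>i. Suc i < length [a,b] \<longrightarrow> adjacent G ([a,b]!i) ([a,b]!Suc i)"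
      using a by (auto simp: less_Suc_eq)
    thus ?thesis using a \<open>b = w\<close> by (intro disjI2 exI[of _ "[a,b]"]) auto
  next
    assume "\<exists>zs. zs \<noteq> [] \<and> hd zs = b \<and> last zs = w \<and> set zs \<subseteq> X \<and>
      (\<forall>i. Suc i < length zs \<longrightarrow> adjacent G (zs!i) (zs!Suc i))"
    then obtain zs where zs: "zs \<noteq> []" "hd zs = b" "last zs = w" "set zs \<subseteq> X"
      "\<forall>i. Suc i < length zs \<longrightarrow> adjacent G (zs!i) (zs!Suc i)" by blast
    have "\<forall>i. Suc i < length (a#zs) \<longrightarrow> adjacent G ((a#zs)!i) ((a#zs)!Suc i)"
    proof (intro allI impI)
      fix i assume i: "Suc i < length (a#zs)"
      show "adjacent G ((a#zs)!i) ((a#zs)!Suc i)"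
      proof (cases i)
        case 0 thus ?thesis using a zs by (simp add: hd_conv_nth)
      next
        case (Suc j) thus ?thesis using zs(5) i by simp
      qed
    qed
    thus ?thesis using zs a by (intro disjI2 exI[of _ "a#zs"]) auto
  qed
qed

lemma conn_iff: "connected_in G X v w \<longleftrightarrow> (adjX G X)\<^sup>*\<^sup>* v w"
  unfolding connected_in_def using path_rtrancl rtrancl_path
  by (metis rtranclp.rtrancl_refl)

lemma gamma_alt: "gamma G X v = {w\<in>X. (adjX G X)\<^sup>*\<^sup>* v w}"
  unfolding gamma_def conn_iff ..

lemma adjacent_sym: "adjacent G a b \<Longrightarrow> adjacent G b a"
  unfolding adjacent_def by (auto simp: insert_commute)

lemma adjX_sym: "(adjX G X)\<^sup>*\<^sup>* a b \<Longrightarrow> (adjX G X)\<^sup>*\<^sup>* b a"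
proof (induction rule: rtranclp_induct)
  case base thus ?case by simp
next
  case (step y z)
  then have "adjX G X z y" by (auto simp: adjX_def adjacent_sym)
  thus ?case using step.IH by (simp add: converse_rtranclp_into_rtranclp)
qed

lemma Gamma_self: "v \<in> verts G \<Longrightarrow> v \<in> Gamma G z v"
  unfolding Gamma_def gamma_alt by simp

lemma Gamma_sub: "Gamma G z v \<subseteq> {u\<in>verts G. z u = z v}"
  unfolding Gamma_def gamma_alt by auto

lemma Gamma_eq: assumes "w \<in> Gamma G z v" shows "Gamma G z w = Gamma G z v"
proof -
  let ?F = "{u\<in>verts G. z u = z v}"
  have zw: "z w = z v" using assms Gamma_sub by fastforce
  have F: "{u\<in>verts G. z u = z w} = ?F" using zw by simp
  have vw: "(adjX G ?F)\<^sup>*\<^sup>* v w" using assms unfolding Gamma_def gamma_alt by auto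
  have wv: "(adjX G ?F)\<^sup>*\<^sup>* w v" using adjX_sym[OF vw] .
  show ?thesis unfolding Gamma_def F gamma_alt
    using vw wv by (auto intro: rtranclp_trans)
qed

lemma adjacent_Gamma:
  assumes "adjacent G u w" "u \<in> verts G" "w \<in> verts G"
  shows "w \<in> Gamma G z u \<longleftrightarrow> z w = z u"
proof
  assume "w \<in> Gamma G z u" thus "z w = z u" using Gamma_sub by fastforce
next
  assume "z w = z u"
  then have "adjX G {x\<in>verts G. z x = z u} u w" using assms by (auto simp: adjX_def)
  thus "w \<in> Gamma G z u" unfolding Gamma_def gamma_alt using assms \<open>z w = z u\<close> by auto
qed

lemma finite_hom: "finite (verts A) \<Longrightarrow> finite (verts X) \<Longrightarrow> finite (hom A X)"
  unfolding hom_def by (rule finite_subset[OF _ finite_PiE]) auto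

lemma finite_strict: "finite (verts A) \<Longrightarrow> finite (verts X) \<Longrightarrow> finite (strict_hom A X)"
  unfolding strict_hom_def using finite_hom by blast

lemma strict_iff1:
  assumes H: "ugraph H" and xi: "\<xi> \<in> hom H X"
  shows "\<xi> \<in> strict_hom H X \<longleftrightarrow> (\<forall>u w. adjacent H u w \<longrightarrow> \<xi> u \<noteq> \<xi> w)"
proof
  assume s: "\<xi> \<in> strict_hom H X"
  show "\<forall>u w. adjacent H u w \<longrightarrow> \<xi> u \<noteq> \<xi> w"
  proof (intro allI impI)
    fix u w assume a: "adjacent H u w"
    then have "{u,w} \<in> edges (loopfree H)" by (auto simp: adjacent_def loopfree_def)
    then have "\<xi> ` {u,w} \<in> edges (loopfree X)" using s by (auto simp: strict_hom_def hom_def)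
    then have "card {\<xi> u, \<xi> w} = 2" by (auto simp: loopfree_def)
    thus "\<xi> u \<noteq> \<xi> w" by auto
  qed
next
  assume nd: "\<forall>u w. adjacent H u w \<longrightarrow> \<xi> u \<noteq> \<xi> w"
  have "\<xi> \<in> hom (loopfree H) (loopfree X)"
    unfolding hom_def
  proof (intro CollectI conjI ballI)
    show "\<xi> \<in> verts (loopfree H) \<rightarrow>\<^sub>E verts (loopfree X)" using xi by (auto simp: hom_def loopfree_def)
  next
    fix e assume "e \<in> edges (loopfree H)"
    then have e: "e \<in> edges H" "card e = 2" by (auto simp: loopfree_def)
    then obtain u w where uw: "e = {u,w}" "u \<noteq> w" by (auto simp: card_2_iff)
    then have "adjacent H u w" using e by (auto simp: adjacent_def)
    then have "\<xi> u \<noteq> \<xi> w" using nd by blast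
    moreover have "\<xi> ` e \<in> edges X" using xi e by (auto simp: hom_def)
    ultimately show "\<xi> ` e \<in> edges (loopfree X)" using uw by (auto simp: loopfree_def)
  qed
  thus "\<xi> \<in> strict_hom H X" using xi by (simp add: strict_hom_def)
qed

lemma adjacent_verts: "ugraph H \<Longrightarrow> adjacent H u w \<Longrightarrow> u \<in> verts H \<and> w \<in> verts H"
  unfolding ugraph_def adjacent_def by blast

lemma strict_iff_Gamma:
  assumes H: "ugraph H" and xi: "\<xi> \<in> hom H X"
  shows "\<xi> \<in> strict_hom H X \<longleftrightarrow> (\<forall>u\<in>verts H. \<forall>w. adjacent H u w \<longrightarrow> w \<notin> Gamma H \<xi> u)"
  unfolding strict_iff1[OF assms] using adjacent_Gamma adjacent_verts[OF H] by metis

lemma strict_le_iso: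
  assumes f: "bij_betw f (verts A) (verts B)" and ed: "\<forall>e\<in>edges A. f ` e \<in> edges B"
    and sub: "\<forall>e\<in>edges A. e \<subseteq> verts A" and fin: "finite (strict_hom A X)"
  shows "card (strict_hom B X) \<le> card (strict_hom A X)"
proof (rule card_inj_on_le[OF _ _ fin])
  let ?phi = "\<lambda>\<xi>. restrict (\<xi> \<circ> f) (verts A)"
  show "?phi ` strict_hom B X \<subseteq> strict_hom A X"
  proof
    fix y assume "y \<in> ?phi ` strict_hom B X"
    then obtain \<xi> where xi: "\<xi> \<in> strict_hom B X" and y: "y = ?phi \<xi>" by blast
    have fA: "f ` verts A = verts B" using f by (simp add: bij_betw_def)
    have im: "y ` e = \<xi> ` (f ` e)" if "e \<in> edges A" for e
      using sub that unfolding y by (auto simp: image_iff subset_iff)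
    have pi: "y \<in> verts A \<rightarrow>\<^sub>E verts X" using xi fA unfolding y strict_hom_def hom_def
      by (auto simp: PiE_iff)
    have h1: "y \<in> hom A X" unfolding hom_def using pi im ed xi
      by (auto simp: strict_hom_def hom_def)
    have h2: "y \<in> hom (loopfree A) (loopfree X)" unfolding hom_def
    proof (intro CollectI conjI ballI)
      show "y \<in> verts (loopfree A) \<rightarrow>\<^sub>E verts (loopfree X)" using pi by (simp add: loopfree_def)
    next
      fix e assume "e \<in> edges (loopfree A)"
      then have e: "e \<in> edges A" "card e = 2" by (auto simp: loopfree_def)
      have "inj_on f e" using f sub e(1) by (meson bij_betw_def inj_on_subset)
      then have "card (f ` e) = 2" using e by (simp add: card_image)
      then have "f ` e \<in> edges (loopfree B)" using ed e by (auto simp: loopfree_def)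
      then have "\<xi> ` (f ` e) \<in> edges (loopfree X)" using xi by (auto simp: strict_hom_def hom_def)
      thus "y ` e \<in> edges (loopfree X)" using im e by simp
    qed
    show "y \<in> strict_hom A X" using h1 h2 by (simp add: strict_hom_def)
  qed
  show "inj_on ?phi (strict_hom B X)"
  proof (rule inj_onI)
    fix x1 x2 assume x: "x1 \<in> strict_hom B X" "x2 \<in> strict_hom B X" and eq: "?phi x1 = ?phi x2"
    have "\<forall>y\<in>verts B. x1 y = x2 y"
    proof
      fix y assume "y \<in> verts B"
      then obtain u where "u \<in> verts A" "y = f u" using f by (auto simp: bij_betw_def)
      thus "x1 y = x2 y" using fun_cong[OF eq, of u] by simp
    qed
    moreover have "x1 \<in> extensional (verts B)" "x2 \<in> extensional (verts B)"
      using x by (auto simp: strict_hom_def hom_def PiE_iff)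
    ultimately show "x1 = x2" by (meson extensionalityI)
  qed
qed




lemma odd_walk:
  fixes E :: "'a \<Rightarrow> 'a \<Rightarrow> bool"
  assumes irr: "\<forall>a. \<not> E a a"
  shows "odd k \<Longrightarrow> (\<forall>i<k. E (w i) (w (Suc i mod k))) \<Longrightarrow>
    \<exists>k' vs. odd k' \<and> 3 \<le> k' \<and> inj_on vs {..<k'} \<and> (\<forall>i<k'. E (vs i) (vs (Suc i mod k')))"
proof (induction k arbitrary: w rule: less_induct)
  case (less k)
  show ?case
  proof (cases "inj_on w {..<k}")
    case True
    have "k \<noteq> 1"
    proof
      assume "k = 1"
      then have "E (w 0) (w (Suc 0 mod 1))" using less.prems(2) by auto
      thus False using irr by simp
    qed
    then have "3 \<le> k" using less.prems(1) by presburger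
    thus ?thesis using True less.prems by blast
  next
    case False
    then obtain a b where ab: "a < k" "b < k" "a \<noteq> b" "w a = w b"
      unfolding inj_on_def by auto
    obtain i j where ij: "i < j" "j < k" "w i = w j"
    proof (cases "a < b")
      case True thus ?thesis using that ab by blast
    next
      case False thus ?thesis using that[of b a] ab by auto
    qed
    define d where "d = j - i"
    have d: "0 < d" "d < k" using ij unfolding d_def by auto
    have step: "E (w m) (w (Suc m mod k))" if "m < k" for m using less.prems(2) that by blast
    have walk1: "\<forall>t<d. E ((\<lambda>t. w (i+t)) t) ((\<lambda>t. w (i+t)) (Suc t mod d))"
    proof (intro allI impI)
      fix t assume t: "t < d"
      have s: "E (w (i+t)) (w (Suc (i+t) mod k))" using step[of "i+t"] t ij d_def by auto
      show "E ((\<lambda>t. w (i+t)) t) ((\<lambda>t. w (i+t)) (Suc t mod d))"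
      proof (cases "Suc t < d")
        case True
        then have "Suc (i+t) mod k = Suc (i+t)" using ij d_def by auto
        thus ?thesis using s True by simp
      next
        case False
        then have "Suc t = d" using t by simp
        then have "Suc t mod d = 0" "Suc (i+t) = j" using ij d_def by auto
        thus ?thesis using s ij by simp
      qed
    qed
    have walk2: "\<forall>t<k-d. E ((\<lambda>t. w ((j+t) mod k)) t) ((\<lambda>t. w ((j+t) mod k)) (Suc t mod (k-d)))"
    proof (intro allI impI)
      fix t assume t: "t < k - d"
      have s: "E (w ((j+t) mod k)) (w (Suc (j+t) mod k))"
        using step[of "(j+t) mod k"] d by (simp add: mod_Suc_eq)
      show "E ((\<lambda>t. w ((j+t) mod k)) t) ((\<lambda>t. w ((j+t) mod k)) (Suc t mod (k-d)))"
      proof (cases "Suc t < k - d")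
        case True
        thus ?thesis using s by simp
      next
        case False
        then have "Suc t = k - d" using t by simp
        then have "Suc t mod (k-d) = 0" "Suc (j+t) = k + i" using ij d_def d by auto
        thus ?thesis using s ij by simp
      qed
    qed
    show ?thesis
    proof (cases "odd d")
      case True
      show ?thesis by (rule less.IH[OF d(2) True walk1])
    next
      case False
      then have "odd (k - d)" using less.prems(1) d by (metis add_diff_inverse_nat less_imp_not_less odd_add)
      moreover have "k - d < k" using d by simp
      ultimately show ?thesis using less.IH[OF _ _ walk2] by blast
    qed
  qed
qed

lemma odd_cycle_transfer:
  assumes z: "\<zeta> \<in> strict_hom Q R" and oc: "has_odd_cycle (loopfree Q)"
  shows "has_odd_cycle (loopfree R)"
proof -
  obtain k vs where k: "odd k" "3 \<le> k" "inj_on vs {..<k}"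
    "\<forall>i<k. vs i \<in> verts (loopfree Q) \<and> {vs i, vs (Suc i mod k)} \<in> edges (loopfree Q)"
    using oc unfolding has_odd_cycle_def by blast
  define E where "E = (\<lambda>a b. a \<noteq> b \<and> a \<in> verts (loopfree R) \<and> {a, b} \<in> edges (loopfree R))"
  have "\<forall>i<k. E (\<zeta> (vs i)) (\<zeta> (vs (Suc i mod k)))"
  proof (intro allI impI)
    fix i assume i: "i < k"
    have v: "vs i \<in> verts Q" using k(4) i by (simp add: loopfree_def)
    have e: "{vs i, vs (Suc i mod k)} \<in> edges (loopfree Q)" using k(4) i by blast
    have "\<zeta> ` {vs i, vs (Suc i mod k)} \<in> edges (loopfree R)"
      using z e by (auto simp: strict_hom_def hom_def)
    then have e2: "{\<zeta> (vs i), \<zeta> (vs (Suc i mod k))} \<in> edges (loopfree R)" by simp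
    then have "card {\<zeta> (vs i), \<zeta> (vs (Suc i mod k))} = 2" by (simp add: loopfree_def)
    then have "\<zeta> (vs i) \<noteq> \<zeta> (vs (Suc i mod k))" by auto
    moreover have "\<zeta> (vs i) \<in> verts (loopfree R)" using z v
      by (auto simp: strict_hom_def hom_def loopfree_def PiE_iff)
    ultimately show "E (\<zeta> (vs i)) (\<zeta> (vs (Suc i mod k)))" using e2 unfolding E_def by blast
  qed
  from odd_walk[of E, OF _ k(1) this] obtain k' vs' where
    "odd k'" "3 \<le> k'" "inj_on vs' {..<k'}" "\<forall>i<k'. E (vs' i) (vs' (Suc i mod k'))"
    unfolding E_def by blast
  thus ?thesis unfolding has_odd_cycle_def E_def by blast
qed




lemma strict_neq: "\<xi> \<in> strict_hom Q X \<Longrightarrow> {a,b} \<in> edges Q \<Longrightarrow> a \<noteq> b \<Longrightarrow> \<xi> a \<noteq> \<xi> b"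
proof -
  assume s: "\<xi> \<in> strict_hom Q X" and e: "{a,b} \<in> edges Q" and ab: "a \<noteq> b"
  then have "{a,b} \<in> edges (loopfree Q)" by (auto simp: loopfree_def)
  then have "\<xi> ` {a,b} \<in> edges (loopfree X)" using s by (auto simp: strict_hom_def hom_def)
  then have "card {\<xi> a, \<xi> b} = 2" by (auto simp: loopfree_def)
  thus "\<xi> a \<noteq> \<xi> b" by auto
qed

lemma Gamma_comp_sub:
  assumes G: "ugraph G"
    and xi: "\<forall>a b. {a,b} \<in> edges Qg \<longrightarrow> a \<noteq> b \<longrightarrow> \<xi> a \<noteq> \<xi> b"
    and Qe: "\<forall>e\<in>edges G. r ` e \<in> edges Qg"
    and psi: "\<forall>u\<in>verts G. \<psi> u = \<xi> (r u)"
  shows "Gamma G \<psi> v \<subseteq> {w\<in>verts G. r w = r v}"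
proof
  fix w assume w: "w \<in> Gamma G \<psi> v"
  let ?F = "{u\<in>verts G. \<psi> u = \<psi> v}"
  have p: "(adjX G ?F)\<^sup>*\<^sup>* v w" and wF: "w \<in> ?F" using w unfolding Gamma_def gamma_alt by auto
  have "r w = r v" using p
  proof (induction rule: rtranclp_induct)
    case base thus ?case by simp
  next
    case (step y z)
    from step.hyps(2) have yz: "y \<in> ?F" "z \<in> ?F" "adjacent G y z" by (auto simp: adjX_def)
    show ?case
    proof (rule ccontr)
      assume "r z \<noteq> r v"
      then have ne: "r y \<noteq> r z" using step.IH by simp
      have "{y,z} \<in> edges G" using yz by (simp add: adjacent_def)
      then have "r ` {y,z} \<in> edges Qg" using Qe by blast
      then have "\<xi> (r y) \<noteq> \<xi> (r z)" using xi ne by simp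
      moreover have "\<psi> y = \<xi> (r y)" "\<psi> z = \<xi> (r z)" using psi yz by auto
      ultimately show False using yz by simp
    qed
  qed
  thus "w \<in> {w\<in>verts G. r w = r v}" using wF by simp
qed

lemma Gamma_mono:
  assumes "\<forall>w\<in>Gamma G \<zeta> v. \<psi> w = \<psi> v"
  shows "Gamma G \<zeta> v \<subseteq> Gamma G \<psi> v"
proof
  fix w assume w: "w \<in> Gamma G \<zeta> v"
  let ?F = "{u\<in>verts G. \<zeta> u = \<zeta> v}"
  let ?P = "{u\<in>verts G. \<psi> u = \<psi> v}"
  have p: "(adjX G ?F)\<^sup>*\<^sup>* v w" and wF: "w \<in> ?F" using w unfolding Gamma_def gamma_alt by auto
  have inG: "x \<in> Gamma G \<zeta> v" if "(adjX G ?F)\<^sup>*\<^sup>* v x" "x \<in> ?F" for x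
    using that unfolding Gamma_def gamma_alt by auto
  have "(adjX G ?P)\<^sup>*\<^sup>* v w" using p
  proof (induction rule: rtranclp_induct)
    case base thus ?case by simp
  next
    case (step y z)
    from step.hyps(2) have yz: "y \<in> ?F" "z \<in> ?F" "adjacent G y z" by (auto simp: adjX_def)
    have "y \<in> Gamma G \<zeta> v" using inG step.hyps(1) yz by blast
    moreover have "z \<in> Gamma G \<zeta> v" using inG step.hyps yz
      by (meson rtranclp.rtrancl_into_rtrancl)
    ultimately have "y \<in> ?P" "z \<in> ?P" using assms yz by auto
    then have "adjX G ?P y z" using yz by (simp add: adjX_def)
    thus ?case using step.IH by simp
  qed
  moreover have "w \<in> ?P" using assms w wF by auto
  ultimately show "w \<in> Gamma G \<psi> v" unfolding Gamma_def gamma_alt by auto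
qed




lemma key:
  fixes G :: "nat ugraph" and R :: "'a ugraph" and S :: "'b ugraph"
  assumes G: "ugraph G" and Rg: "ugraph R" and Sg: "ugraph S"
    and hyp: "\<forall>Q::nat ugraph. ugraph Q \<longrightarrow> strict_hom Q R \<noteq> {} \<longrightarrow>
                card (strict_hom Q R) \<le> card (strict_hom Q S)"
  shows "\<exists>\<rho>. inj_on \<rho> (hom G R) \<and> \<rho> ` hom G R \<subseteq> hom G S \<and>
          (\<forall>\<zeta>\<in>hom G R. \<forall>v\<in>verts G. Gamma G (\<rho> \<zeta>) v = Gamma G \<zeta> v)"
proof -
  define V where "V = verts G"
  have finV: "finite V" using G by (simp add: ugraph_def V_def)
  have eV: "e \<subseteq> V" if "e \<in> edges G" for e using G that by (auto simp: ugraph_def V_def)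
  define \<iota> where "\<iota> = (\<lambda>Q::nat ugraph. SOME f. f ` strict_hom Q R \<subseteq> strict_hom Q S \<and> inj_on f (strict_hom Q R))"
  have \<iota>_ok: "\<iota> Q ` strict_hom Q R \<subseteq> strict_hom Q S \<and> inj_on (\<iota> Q) (strict_hom Q R)"
    if Q: "ugraph Q" for Q
  proof -
    have "\<exists>f. f ` strict_hom Q R \<subseteq> strict_hom Q S \<and> inj_on f (strict_hom Q R)"
    proof (cases "strict_hom Q R = {}")
      case True thus ?thesis by auto
    next
      case False
      have fQ: "finite (verts Q)" using Q by (simp add: ugraph_def)
      have "finite (strict_hom Q R)" "finite (strict_hom Q S)"
        using finite_strict fQ Rg Sg by (auto simp: ugraph_def)
      thus ?thesis using card_le_inj hyp Q False by blast
    qed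
    thus ?thesis unfolding \<iota>_def by (rule someI_ex)
  qed
  define r where "r = (\<lambda>\<zeta> u. Min (Gamma G (\<zeta>::nat \<Rightarrow> 'a) u))"
  define Q where "Q = (\<lambda>\<zeta>. \<lparr>verts = r \<zeta> ` V, edges = (\<lambda>e. r \<zeta> ` e) ` edges G\<rparr>)"
  define z' where "z' = (\<lambda>\<zeta>. restrict \<zeta> (verts (Q \<zeta>)))"
  define \<rho> where "\<rho> = (\<lambda>\<zeta>. restrict (\<lambda>u. \<iota> (Q \<zeta>) (z' \<zeta>) (r \<zeta> u)) V)"
  have F1: "r \<zeta> u \<in> Gamma G \<zeta> u" if "u \<in> V" for \<zeta> u
  proof -
    have "finite (Gamma G \<zeta> u)" using Gamma_sub finV V_def by (metis (no_types, lifting) finite_subset mem_Collect_eq subsetI)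
    moreover have "Gamma G \<zeta> u \<noteq> {}" using Gamma_self that V_def by fastforce
    ultimately show ?thesis unfolding r_def by (rule Min_in)
  qed
  have F2: "r \<zeta> u \<in> V \<and> \<zeta> (r \<zeta> u) = \<zeta> u" if "u \<in> V" for \<zeta> u
    using F1[OF that, of \<zeta>] Gamma_sub[of G \<zeta> u] V_def by blast
  have F3: "r \<zeta> w = r \<zeta> u \<longleftrightarrow> w \<in> Gamma G \<zeta> u" if "u \<in> V" "w \<in> V" for \<zeta> u w
  proof
    assume "w \<in> Gamma G \<zeta> u"
    then show "r \<zeta> w = r \<zeta> u" unfolding r_def using Gamma_eq by metis
  next
    assume eq: "r \<zeta> w = r \<zeta> u"
    have "Gamma G \<zeta> (r \<zeta> u) = Gamma G \<zeta> w" using F1[OF that(2)] eq Gamma_eq by metis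
    moreover have "Gamma G \<zeta> (r \<zeta> u) = Gamma G \<zeta> u" using F1[OF that(1)] Gamma_eq by metis
    ultimately show "w \<in> Gamma G \<zeta> u" using Gamma_self that V_def by metis
  qed
  have F4: "ugraph (Q \<zeta>)" for \<zeta>
    unfolding ugraph_def
  proof (intro conjI ballI)
    show "finite (verts (Q \<zeta>))" using finV by (simp add: Q_def)
    show "verts (Q \<zeta>) \<noteq> {}" using G by (simp add: Q_def V_def ugraph_def)
  next
    fix e' assume "e' \<in> edges (Q \<zeta>)"
    then obtain e where e: "e \<in> edges G" "e' = r \<zeta> ` e" by (auto simp: Q_def)
    have c: "card e = 1 \<or> card e = 2" using G e(1) by (simp add: ugraph_def)
    then have fe: "finite e" "e \<noteq> {}" by (auto intro: card_ge_0_finite)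
    show "e' \<subseteq> verts (Q \<zeta>)" using e eV by (auto simp: Q_def)
    have "card e' \<le> card e" using e fe by (simp add: card_image_le)
    moreover have "card e' \<ge> 1" using e fe by (simp add: Suc_leI card_gt_0_iff)
    ultimately show "card e' = 1 \<or> card e' = 2" using c by linarith
  qed
  have F5: "z' \<zeta> \<in> strict_hom (Q \<zeta>) R" if z: "\<zeta> \<in> hom G R" for \<zeta>
  proof -
    have h: "z' \<zeta> \<in> hom (Q \<zeta>) R" unfolding hom_def
    proof (intro CollectI conjI ballI)
      show "z' \<zeta> \<in> verts (Q \<zeta>) \<rightarrow>\<^sub>E verts R"
        using z F2 by (auto simp: z'_def Q_def hom_def V_def PiE_iff)
    next
      fix e' assume "e' \<in> edges (Q \<zeta>)"
      then obtain e where e: "e \<in> edges G" "e' = r \<zeta> ` e" by (auto simp: Q_def)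
      have "z' \<zeta> ` e' = \<zeta> ` e"
      proof -
        have sub: "r \<zeta> ` e \<subseteq> verts (Q \<zeta>)" using eV[OF e(1)] by (auto simp: Q_def)
        have "z' \<zeta> ` e' = \<zeta> ` (r \<zeta> ` e)" unfolding e(2) z'_def
          by (rule image_cong[OF refl]) (use sub in auto)
        also have "\<dots> = (\<lambda>u. \<zeta> (r \<zeta> u)) ` e" by (simp add: image_image)
        also have "\<dots> = \<zeta> ` e"
          by (rule image_cong[OF refl]) (meson F2 eV[OF e(1)] subsetD)
        finally show ?thesis .
      qed
      thus "z' \<zeta> ` e' \<in> edges R" using z e by (auto simp: hom_def)
    qed
    have "\<forall>a b. adjacent (Q \<zeta>) a b \<longrightarrow> z' \<zeta> a \<noteq> z' \<zeta> b"
    proof (intro allI impI)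
      fix a b assume ab: "adjacent (Q \<zeta>) a b"
      then obtain e where e: "e \<in> edges G" "{a,b} = r \<zeta> ` e" "a \<noteq> b"
        by (auto simp: adjacent_def Q_def)
      obtain u w where uw: "u \<in> e" "w \<in> e" "r \<zeta> u = a" "r \<zeta> w = b"
        using e(2) by (metis imageE insertI1 insert_commute)
      have uwV: "u \<in> V" "w \<in> V" using uw eV e by auto
      have ne: "u \<noteq> w" using uw e by auto
      have "e = {u,w}"
      proof -
        have c: "card e = 1 \<or> card e = 2" using G e(1) by (simp add: ugraph_def)
        then have fe: "finite e" by (auto intro: card_ge_0_finite)
        have "{u,w} \<subseteq> e" using uw by auto
        moreover have "card {u,w} = 2" using ne by simp
        moreover have "card e \<le> 2" using c by auto
        ultimately show ?thesis using fe by (metis card_seteq)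
      qed
      then have adj: "adjacent G u w" using e ne by (simp add: adjacent_def)
      have "\<zeta> u \<noteq> \<zeta> w"
      proof
        assume "\<zeta> u = \<zeta> w"
        then have "w \<in> Gamma G \<zeta> u" using adjacent_Gamma[OF adj] uwV V_def by metis
        then have "r \<zeta> w = r \<zeta> u" using F3 uwV by blast
        thus False using uw e by simp
      qed
      moreover have "z' \<zeta> a = \<zeta> u" "z' \<zeta> b = \<zeta> w"
        using uw uwV F2 by (auto simp: z'_def Q_def)
      ultimately show "z' \<zeta> a \<noteq> z' \<zeta> b" by simp
    qed
    thus ?thesis using strict_iff1[OF F4 h] by blast
  qed
  have F6: "\<iota> (Q \<zeta>) (z' \<zeta>) \<in> strict_hom (Q \<zeta>) S" if "\<zeta> \<in> hom G R" for \<zeta>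
    using \<iota>_ok[OF F4] F5[OF that] by blast
  have F7: "\<rho> \<zeta> \<in> hom G S" if z: "\<zeta> \<in> hom G R" for \<zeta>
  proof -
    let ?xi = "\<iota> (Q \<zeta>) (z' \<zeta>)"
    have xi: "?xi \<in> hom (Q \<zeta>) S" using F6[OF z] by (simp add: strict_hom_def)
    show ?thesis unfolding hom_def
    proof (intro CollectI conjI ballI)
      show "\<rho> \<zeta> \<in> verts G \<rightarrow>\<^sub>E verts S"
        using xi by (auto simp: \<rho>_def V_def hom_def Q_def PiE_iff)
    next
      fix e assume e: "e \<in> edges G"
      have "\<rho> \<zeta> ` e = ?xi ` (r \<zeta> ` e)" using eV[OF e] by (auto simp: \<rho>_def)
      moreover have "r \<zeta> ` e \<in> edges (Q \<zeta>)" using e by (simp add: Q_def)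
      ultimately show "\<rho> \<zeta> ` e \<in> edges S" using xi by (auto simp: hom_def)
    qed
  qed
  have F8: "Gamma G (\<rho> \<zeta>) v = Gamma G \<zeta> v" if z: "\<zeta> \<in> hom G R" and v: "v \<in> verts G" for \<zeta> v
  proof
    let ?xi = "\<iota> (Q \<zeta>) (z' \<zeta>)"
    have "Gamma G (\<rho> \<zeta>) v \<subseteq> {w\<in>verts G. r \<zeta> w = r \<zeta> v}"
    proof (rule Gamma_comp_sub[OF G])
      show "\<forall>a b. {a,b} \<in> edges (Q \<zeta>) \<longrightarrow> a \<noteq> b \<longrightarrow> ?xi a \<noteq> ?xi b"
        using strict_neq[OF F6[OF z]] by blast
      show "\<forall>e\<in>edges G. r \<zeta> ` e \<in> edges (Q \<zeta>)" by (simp add: Q_def)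
      show "\<forall>u\<in>verts G. \<rho> \<zeta> u = ?xi (r \<zeta> u)" by (simp add: \<rho>_def V_def)
    qed
    also have "\<dots> \<subseteq> Gamma G \<zeta> v"
    proof
      fix w assume "w \<in> {w\<in>verts G. r \<zeta> w = r \<zeta> v}"
      then have "w \<in> V" "r \<zeta> w = r \<zeta> v" by (auto simp: V_def)
      thus "w \<in> Gamma G \<zeta> v" using F3[of v w \<zeta>] v V_def by blast
    qed
    finally show "Gamma G (\<rho> \<zeta>) v \<subseteq> Gamma G \<zeta> v" .
    show "Gamma G \<zeta> v \<subseteq> Gamma G (\<rho> \<zeta>) v"
    proof (rule Gamma_mono, rule ballI)
      fix w assume w: "w \<in> Gamma G \<zeta> v"
      then have wV: "w \<in> V" using Gamma_sub V_def by fastforce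
      then have "r \<zeta> w = r \<zeta> v" using F3 w v V_def by blast
      thus "\<rho> \<zeta> w = \<rho> \<zeta> v" using wV v V_def by (simp add: \<rho>_def)
    qed
  qed
  have F9: "inj_on \<rho> (hom G R)"
  proof (rule inj_onI)
    fix z1 z2 assume z1: "z1 \<in> hom G R" and z2: "z2 \<in> hom G R" and eq: "\<rho> z1 = \<rho> z2"
    have gam: "Gamma G z1 v = Gamma G z2 v" if "v \<in> V" for v
      using F8[OF z1] F8[OF z2] eq that V_def by metis
    have req: "r z1 u = r z2 u" if "u \<in> V" for u using gam[OF that] by (simp add: r_def)
    have Qeq: "Q z1 = Q z2"
    proof -
      have "r z1 ` V = r z2 ` V" using req by (rule image_cong[OF refl])
      moreover have "(\<lambda>e. r z1 ` e) ` edges G = (\<lambda>e. r z2 ` e) ` edges G"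
      proof (rule image_cong[OF refl])
        fix e assume "e \<in> edges G"
        thus "r z1 ` e = r z2 ` e" using eV req by (meson image_cong subsetD)
      qed
      ultimately show ?thesis by (simp add: Q_def)
    qed
    define q where "q = Q z1"
    have s1: "z' z1 \<in> strict_hom q R" using F5[OF z1] q_def by simp
    have s2: "z' z2 \<in> strict_hom q R" using F5[OF z2] q_def Qeq by simp
    have x1: "\<iota> q (z' z1) \<in> strict_hom q S" using F6[OF z1] q_def by simp
    have x2: "\<iota> q (z' z2) \<in> strict_hom q S" using F6[OF z2] q_def Qeq by simp
    have "\<forall>y\<in>verts q. \<iota> q (z' z1) y = \<iota> q (z' z2) y"
    proof
      fix y assume "y \<in> verts q"
      then obtain u where u: "u \<in> V" "y = r z1 u" by (auto simp: q_def Q_def)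
      have "\<rho> z1 u = \<rho> z2 u" using eq by simp
      thus "\<iota> q (z' z1) y = \<iota> q (z' z2) y" using u req Qeq q_def by (simp add: \<rho>_def)
    qed
    moreover have "\<iota> q (z' z1) \<in> extensional (verts q)" "\<iota> q (z' z2) \<in> extensional (verts q)"
      using x1 x2 by (auto simp: strict_hom_def hom_def PiE_iff)
    ultimately have "\<iota> q (z' z1) = \<iota> q (z' z2)" by (meson extensionalityI)
    then have zz: "z' z1 = z' z2" using \<iota>_ok[OF F4[of z1]] s1 s2 q_def by (meson inj_onD)
    have "\<forall>u\<in>verts G. z1 u = z2 u"
    proof
      fix u assume "u \<in> verts G"
      then have u: "u \<in> V" by (simp add: V_def)
      have ru: "r z1 u \<in> verts q" using u by (simp add: q_def Q_def)
      have "z1 u = z1 (r z1 u)" using F2[OF u, of z1] by simp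
      also have "\<dots> = z' z1 (r z1 u)" using ru q_def by (simp add: z'_def)
      also have "\<dots> = z' z2 (r z1 u)" using zz by simp
      also have "\<dots> = z2 (r z1 u)" using ru q_def Qeq by (simp add: z'_def)
      also have "\<dots> = z2 u" using F2[OF u, of z2] req[OF u] by simp
      finally show "z1 u = z2 u" .
    qed
    moreover have "z1 \<in> extensional (verts G)" "z2 \<in> extensional (verts G)"
      using z1 z2 by (auto simp: hom_def PiE_iff)
    ultimately show "z1 = z2" by (meson extensionalityI)
  qed
  show ?thesis using F7 F8 F9 by blast
qed




theorem theorem4:
  fixes R :: "'a ugraph" and S :: "'b ugraph"
    and U' Ur :: "nat ugraph set"
  assumes R: "ugraph R"
    and U'_sub: "U' \<subseteq> {G. ugraph G}"
    and cls: "U' = {G. ugraph G} \<or> (in_Co R \<and> {G. in_Co G} \<subseteq> U')"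
    and rep: "rep_system U' Ur"
    and S: "ugraph S"
  shows "(sqsub_Gamma Ur R S \<longleftrightarrow>
           (\<forall>G\<in>U'. card (strict_hom G R) \<le> card (strict_hom G S)))
       \<and> ((\<forall>G\<in>U'. card (strict_hom G R) \<le> card (strict_hom G S)) \<longrightarrow>
           (\<forall>G\<in>U'. card (hom G R) \<le> card (hom G S)))"
proof -
  let ?C = "\<forall>G\<in>U'. card (strict_hom G R) \<le> card (strict_hom G S)"
  have fR: "finite (verts R)" and fS: "finite (verts S)" using R S by (auto simp: ugraph_def)
  have UrU: "Ur \<subseteq> U'" using rep by (simp add: rep_system_def)
  have dir1: ?C if sq: "sqsub_Gamma Ur R S"
  proof
    fix G assume GU: "G \<in> U'"
    have Gg: "ugraph G" using GU U'_sub by blast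
    obtain \<rho> :: "nat ugraph \<Rightarrow> (nat \<Rightarrow> 'a) \<Rightarrow> (nat \<Rightarrow> 'b)" where \<rho>:
      "\<forall>G\<in>Ur. inj_on (\<rho> G) (hom G R) \<and> \<rho> G ` hom G R \<subseteq> hom G S \<and>
          (\<forall>\<zeta>\<in>hom G R. \<forall>v\<in>verts G. Gamma G (\<rho> G \<zeta>) v = Gamma G \<zeta> v)"
      using sq unfolding sqsub_Gamma_def by blast
    obtain H where H: "H \<in> Ur" "iso G H" using rep GU unfolding rep_system_def by blast
    have Hg: "ugraph H" using H(1) UrU U'_sub by blast
    have fG: "finite (verts G)" and fH: "finite (verts H)" using Gg Hg by (auto simp: ugraph_def)
    have "card (strict_hom H R) \<le> card (strict_hom H S)"
    proof (rule card_inj_on_le)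
      have "inj_on (\<rho> H) (hom H R)" using \<rho> H(1) by blast
      thus "inj_on (\<rho> H) (strict_hom H R)"
        by (rule inj_on_subset) (simp add: strict_hom_def)
      show "finite (strict_hom H S)" using finite_strict fH fS by blast
      show "\<rho> H ` strict_hom H R \<subseteq> strict_hom H S"
      proof
        fix y assume "y \<in> \<rho> H ` strict_hom H R"
        then obtain \<zeta> where z: "\<zeta> \<in> strict_hom H R" "y = \<rho> H \<zeta>" by blast
        have zh: "\<zeta> \<in> hom H R" using z by (simp add: strict_hom_def)
        have yh: "y \<in> hom H S" using \<rho> H(1) zh z(2) by blast
        have gam: "\<forall>v\<in>verts H. Gamma H y v = Gamma H \<zeta> v" using \<rho> H(1) zh z(2) by blast
        show "y \<in> strict_hom H S"
          using strict_iff_Gamma[OF Hg yh] strict_iff_Gamma[OF Hg zh] z(1) gam by simp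
      qed
    qed
    obtain f where f: "bij_betw f (verts G) (verts H)" "(\<lambda>e. f ` e) ` edges G = edges H"
      using H(2) unfolding iso_def by blast
    have eG: "\<forall>e\<in>edges G. e \<subseteq> verts G" using Gg by (simp add: ugraph_def)
    have eH: "\<forall>e\<in>edges H. e \<subseteq> verts H" using Hg by (simp add: ugraph_def)
    have "card (strict_hom H S) \<le> card (strict_hom G S)"
      by (rule strict_le_iso[OF f(1)]) (use f(2) eG finite_strict fG fS in auto)
    moreover have "card (strict_hom G R) \<le> card (strict_hom H R)"
    proof (rule strict_le_iso)
      show "bij_betw (inv_into (verts G) f) (verts H) (verts G)" using f(1) by (rule bij_betw_inv_into)
      show "\<forall>e\<in>edges H. inv_into (verts G) f ` e \<in> edges G"
      proof
        fix e assume "e \<in> edges H"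
        then obtain e0 where e0: "e0 \<in> edges G" "e = f ` e0" using f(2) by blast
        have "inv_into (verts G) f ` e = e0" using e0 eG f(1)
          by (simp add: bij_betw_def inv_into_image_cancel)
        thus "inv_into (verts G) f ` e \<in> edges G" using e0 by simp
      qed
      show "\<forall>e\<in>edges H. e \<subseteq> verts H" by (rule eH)
      show "finite (strict_hom H R)" using finite_strict fH fR by blast
    qed
    ultimately show "card (strict_hom G R) \<le> card (strict_hom G S)"
      using \<open>card (strict_hom H R) \<le> card (strict_hom H S)\<close> by linarith
  qed
  have hyp: "\<forall>Q::nat ugraph. ugraph Q \<longrightarrow> strict_hom Q R \<noteq> {} \<longrightarrow>
                card (strict_hom Q R) \<le> card (strict_hom Q S)" if C: ?C
  proof (intro allI impI)
    fix Q :: "nat ugraph" assume Q: "ugraph Q" and ne: "strict_hom Q R \<noteq> {}"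
    have "Q \<in> U'"
      using cls
    proof
      assume "U' = {G. ugraph G}" thus ?thesis using Q by simp
    next
      assume co: "in_Co R \<and> {G. in_Co G} \<subseteq> U'"
      obtain \<zeta> where z: "\<zeta> \<in> strict_hom Q R" using ne by blast
      have "\<not> has_odd_cycle (loopfree Q)"
        using odd_cycle_transfer[OF z] co by (auto simp: in_Co_def)
      then have "in_Co Q" using Q by (simp add: in_Co_def)
      thus ?thesis using co by blast
    qed
    thus "card (strict_hom Q R) \<le> card (strict_hom Q S)" using C by blast
  qed
  have dir2: "sqsub_Gamma Ur R S" if C: ?C
  proof -
    have "\<forall>G\<in>Ur. \<exists>\<rho>. inj_on \<rho> (hom G R) \<and> \<rho> ` hom G R \<subseteq> hom G S \<and>
          (\<forall>\<zeta>\<in>hom G R. \<forall>v\<in>verts G. Gamma G (\<rho> \<zeta>) v = Gamma G \<zeta> v)"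
    proof
      fix G assume "G \<in> Ur"
      then have "ugraph G" using UrU U'_sub by blast
      thus "\<exists>\<rho>. inj_on \<rho> (hom G R) \<and> \<rho> ` hom G R \<subseteq> hom G S \<and>
          (\<forall>\<zeta>\<in>hom G R. \<forall>v\<in>verts G. Gamma G (\<rho> \<zeta>) v = Gamma G \<zeta> v)"
        using key[OF _ R S hyp[OF C]] by blast
    qed
    then obtain \<rho> where "\<forall>G\<in>Ur. inj_on (\<rho> G) (hom G R) \<and> \<rho> G ` hom G R \<subseteq> hom G S \<and>
          (\<forall>\<zeta>\<in>hom G R. \<forall>v\<in>verts G. Gamma G (\<rho> G \<zeta>) v = Gamma G \<zeta> v)"
      by (metis (no_types, lifting) bchoice)
    thus ?thesis unfolding sqsub_Gamma_def by blast
  qed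
  have dir3: "\<forall>G\<in>U'. card (hom G R) \<le> card (hom G S)" if C: ?C
  proof
    fix G assume "G \<in> U'"
    then have Gg: "ugraph G" using U'_sub by blast
    obtain \<rho> where "inj_on \<rho> (hom G R)" "\<rho> ` hom G R \<subseteq> hom G S"
      using key[OF Gg R S hyp[OF C]] by blast
    moreover have "finite (hom G S)" using finite_hom Gg fS by (auto simp: ugraph_def)
    ultimately show "card (hom G R) \<le> card (hom G S)" by (meson card_inj_on_le)
  qed
  show ?thesis using dir1 dir2 dir3 by blast
qed


end
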